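(* $Z^*(G)=Z^*(\hat G)$. Moreover, there exists an optimal $\hat G$-r-forest (one attaining $Z^*(\hat G)$) with at most $2r-2$ non-terminal vertices.
   Context: Let $G=(V,E)$ be a connected undirected network with $n$ vertices and edge lengths $c_e>0$. Let $\mathcal R$ be a set of $r\ge2$ relevant pairs (r-pairs) of vertices, with $r$ a fixed constant. A terminal vertex is a vertex belonging to some r-pair. Problem A (general objective) on a network $H$ with vertex set $V$: build edges one at a time at unit speed from time $0$, in some sequence of distinct edges. The connection time of an r-pair $\{u,v\}$ is the earliest time at which $u$ and $v$ are joined by a path of completed edges. The objective $\Phi$ is a non-decreasing function of the connection times of the r-pairs (computable in $O(r)$ time from them), and is to be minimized. It suffices to consider sequences whose edges form a spanning tree of $H$. $\hat G$ is the metric closure of $G$: the complete network on $V$ whose edge $(u,v)$ has length equal to the shortest-path distance in $G$. $Z^*(G)$ and $Z^*(\hat G)$ denote the optimal objective values of Problem A on $G$ and on $\hat G$, respectively, with the same r-pairs and objective. An r-forest in $H$ is a subnetwork that is a forest, joins every r-pair by a path, and each of whose edges lies on the path of some r-pair. For an r-forest, its value is the minimum of $\Phi$ over all orderings of its edges, where the connection time of an r-pair is the completion time of the last-built edge of its path in the forest. A $\hat G$-r-forest is an r-forest in $\hat G$. It is optimal if its value equals $Z^*(\hat G)$. Its non-terminal vertices are its vertices that are not terminal vertices. *)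

theory Defs
  imports Complex_Main
begin

definition network :: "'a set \<Rightarrow> 'a set set \<Rightarrow> ('a set \<Rightarrow> real) \<Rightarrow> bool" where
  "network V E c \<longleftrightarrow> finite V \<and>
     (\<forall>e\<in>E. \<exists>u v. u \<in> V \<and> v \<in> V \<and> u \<noteq> v \<and> e = {u, v}) \<and>
     (\<forall>e\<in>E. c e > 0)"

definition joined :: "'a set set \<Rightarrow> 'a \<Rightarrow> 'a \<Rightarrow> bool" where
  "joined F u v \<longleftrightarrow> (u, v) \<in> {(x, y). {x, y} \<in> F}\<^sup>*"

definition connected_net :: "'a set \<Rightarrow> 'a set set \<Rightarrow> bool" where
  "connected_net V E \<longleftrightarrow> (\<forall>u\<in>V. \<forall>v\<in>V. joined E u v)"

definition is_walk :: "'a set set \<Rightarrow> 'a list \<Rightarrow> bool" where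
  "is_walk E p \<longleftrightarrow> p \<noteq> [] \<and> (\<forall>i. Suc i < length p \<longrightarrow> {p ! i, p ! Suc i} \<in> E)"

definition walk_len :: "('a set \<Rightarrow> real) \<Rightarrow> 'a list \<Rightarrow> real" where
  "walk_len c p = (\<Sum>i<length p - 1. c {p ! i, p ! Suc i})"

definition path_uses :: "'a set set \<Rightarrow> 'a \<Rightarrow> 'a \<Rightarrow> 'a set \<Rightarrow> bool" where
  "path_uses F u v e \<longleftrightarrow> (\<exists>p. is_walk F p \<and> distinct p \<and> hd p = u \<and> last p = v \<and>
      (\<exists>i. Suc i < length p \<and> {p ! i, p ! Suc i} = e))"

text \<open>Metric closure: complete network on V, edge length = shortest-path distance in G.\<close>
definition hat_E :: "'a set \<Rightarrow> 'a set set" where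
  "hat_E V = {{u, v} | u v. u \<in> V \<and> v \<in> V \<and> u \<noteq> v}"

definition hat_c :: "'a set set \<Rightarrow> ('a set \<Rightarrow> real) \<Rightarrow> 'a set \<Rightarrow> real" where
  "hat_c E c e = Inf {walk_len c p | p. is_walk E p \<and> {hd p, last p} = e}"

text \<open>Problem A. A building sequence is a list of distinct edges; edges are built one at a
  time at unit speed from time 0, so after k edges the time is the sum of their lengths.\<close>
definition comp_time :: "('a set \<Rightarrow> real) \<Rightarrow> 'a set list \<Rightarrow> nat \<Rightarrow> real" where
  "comp_time c es k = sum_list (map c (take k es))"

definition conn_time :: "('a set \<Rightarrow> real) \<Rightarrow> 'a set list \<Rightarrow> 'a \<times> 'a \<Rightarrow> real" where
  "conn_time c es uv = comp_time c es (LEAST k. joined (set (take k es)) (fst uv) (snd uv))"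

definition conn_times :: "('a set \<Rightarrow> real) \<Rightarrow> ('a \<times> 'a) list \<Rightarrow> 'a set list \<Rightarrow> real list" where
  "conn_times c R es = map (conn_time c es) R"

definition feasible_seq :: "'a set set \<Rightarrow> ('a \<times> 'a) list \<Rightarrow> 'a set list \<Rightarrow> bool" where
  "feasible_seq E R es \<longleftrightarrow> distinct es \<and> set es \<subseteq> E \<and>
     (\<forall>(u, v)\<in>set R. joined (set es) u v)"

definition Zstar :: "'a set set \<Rightarrow> ('a set \<Rightarrow> real) \<Rightarrow> ('a \<times> 'a) list \<Rightarrow> (real list \<Rightarrow> real) \<Rightarrow> real" where
  "Zstar E c R \<Phi> = Inf ((\<lambda>es. \<Phi> (conn_times c R es)) ` {es. feasible_seq E R es})"

definition forest :: "'a set set \<Rightarrow> bool" where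
  "forest F \<longleftrightarrow> (\<forall>e\<in>F. \<forall>x y. e = {x, y} \<longrightarrow> \<not> joined (F - {e}) x y)"

definition r_forest :: "'a set set \<Rightarrow> ('a \<times> 'a) list \<Rightarrow> 'a set set \<Rightarrow> bool" where
  "r_forest E R F \<longleftrightarrow> F \<subseteq> E \<and> finite F \<and> forest F \<and>
     (\<forall>(u, v)\<in>set R. joined F u v) \<and>
     (\<forall>e\<in>F. \<exists>(u, v)\<in>set R. path_uses F u v e)"

text \<open>Value of a forest: minimum over orderings of its edges. In a forest, the first moment
  u and v are joined by built edges is the completion of the last-built edge of their path.\<close>
definition forest_value :: "('a set \<Rightarrow> real) \<Rightarrow> ('a \<times> 'a) list \<Rightarrow> (real list \<Rightarrow> real) \<Rightarrow> 'a set set \<Rightarrow> real" where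
  "forest_value c R \<Phi> F = Inf ((\<lambda>es. \<Phi> (conn_times c R es)) ` {es. distinct es \<and> set es = F})"

definition terminals :: "('a \<times> 'a) list \<Rightarrow> 'a set" where
  "terminals R = fst ` set R \<union> snd ` set R"

definition non_terminals :: "('a \<times> 'a) list \<Rightarrow> 'a set set \<Rightarrow> 'a set" where
  "non_terminals R F = \<Union>F - terminals R"

definition monotone_obj :: "nat \<Rightarrow> (real list \<Rightarrow> real) \<Rightarrow> bool" where
  "monotone_obj r \<Phi> \<longleftrightarrow> (\<forall>xs ys. length xs = r \<longrightarrow> length ys = r \<longrightarrow>
      list_all2 (\<le>) xs ys \<longrightarrow> \<Phi> xs \<le> \<Phi> ys)"

end

theory Submission
  imports Defs
begin


lemma joined_refl[simp]: "joined F u u"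
  by (simp add: joined_def)

lemma joined_edge: "{x,y} \<in> F \<Longrightarrow> joined F x y"
  unfolding joined_def by (rule r_into_rtrancl) simp

lemma joined_trans: "joined F x y \<Longrightarrow> joined F y z \<Longrightarrow> joined F x z"
  unfolding joined_def by (rule rtrancl_trans)

lemma joined_sym: "joined F x y \<Longrightarrow> joined F y x"
proof -
  have "sym {(x, y). {x, y} \<in> F}" by (auto simp: sym_def insert_commute)
  hence "sym ({(x, y). {x, y} \<in> F}\<^sup>*)" by (rule sym_rtrancl)
  thus "joined F x y \<Longrightarrow> joined F y x" unfolding joined_def by (auto dest: symD)
qed

lemma joined_mono: "joined F x y \<Longrightarrow> F \<subseteq> G \<Longrightarrow> joined G x y"
  unfolding joined_def using rtrancl_mono[of "{(x,y). {x,y}\<in>F}" "{(x,y). {x,y}\<in>G}"] by auto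

lemma joined_hom:
  assumes h: "\<And>s t. {s,t} \<in> P \<Longrightarrow> joined Q (f s) (f t)" and j: "joined P u v"
  shows "joined Q (f u) (f v)"
  using j unfolding joined_def
proof (induction rule: rtrancl_induct)
  case base then show ?case by simp
next
  case (step y z)
  then have "joined Q (f y) (f z)" using h by simp
  with step.IH show ?case unfolding joined_def by (rule rtrancl_trans)
qed

lemma joined_empty: "joined {} u v \<Longrightarrow> u = v"
  unfolding joined_def by (auto elim: rtranclE)

lemma joined_insert_cases:
  assumes "joined (insert {x,y} S) a b"
  shows "joined S a b \<or> (joined S a x \<and> joined S y b) \<or> (joined S a y \<and> joined S x b)"
  using assms unfolding joined_def[of "insert _ _"]
proof (induction rule: rtrancl_induct)
  case base then show ?case by simp
next
  case (step b z)
  then have e: "{b,z} \<in> S \<or> {b,z} = {x,y}" by blast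
  show ?case
  proof (cases "{b,z} \<in> S")
    case True
    then have "joined S b z" by (rule joined_edge)
    with step.IH show ?thesis by (meson joined_trans)
  next
    case False
    with e have "(b = x \<and> z = y) \<or> (b = y \<and> z = x)" by (auto simp: doubleton_eq_iff)
    with step.IH show ?thesis by (meson joined_trans joined_sym joined_refl)
  qed
qed

lemma joined_isolated:
  assumes "joined S a x" "\<forall>e\<in>S. x \<notin> e"
  shows "a = x"
  using assms unfolding joined_def by (auto elim: rtranclE)




lemma is_walk_single[simp]: "is_walk E [x]"
  by (simp add: is_walk_def)

lemma is_walk_Nil[simp]: "\<not> is_walk E []"
  by (simp add: is_walk_def)

lemma is_walk_Cons2: "is_walk E (x#y#p) \<longleftrightarrow> {x,y} \<in> E \<and> is_walk E (y#p)"
proof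
  assume a: "is_walk E (x#y#p)"
  have "{x,y} \<in> E" using a unfolding is_walk_def by (metis One_nat_def length_Cons nth_Cons_0 nth_Cons_Suc zero_less_Suc Suc_less_eq)
  moreover have "is_walk E (y#p)" using a unfolding is_walk_def
    by (metis Suc_less_eq length_Cons list.distinct(1) nth_Cons_Suc)
  ultimately show "{x,y} \<in> E \<and> is_walk E (y#p)" by simp
next
  assume a: "{x,y} \<in> E \<and> is_walk E (y#p)"
  show "is_walk E (x#y#p)" unfolding is_walk_def
  proof (intro conjI allI impI)
    fix i assume i: "Suc i < length (x#y#p)"
    show "{(x#y#p) ! i, (x#y#p) ! Suc i} \<in> E"
    proof (cases i)
      case 0 then show ?thesis using a by simp
    next
      case (Suc j) then show ?thesis using a i unfolding is_walk_def by auto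
    qed
  qed simp
qed

lemma walk_len_Nil[simp]: "walk_len c [] = 0" by (simp add: walk_len_def)
lemma walk_len_single[simp]: "walk_len c [x] = 0" by (simp add: walk_len_def)

lemma walk_len_Cons2: "walk_len c (x#y#p) = c {x,y} + walk_len c (y#p)"
proof -
  have "walk_len c (x#y#p) = (\<Sum>i<Suc (length p). c {(x#y#p)!i, (x#y#p)!Suc i})" by (simp add: walk_len_def)
  also have "\<dots> = c{x,y} + (\<Sum>i<length p. c {(x#y#p)!Suc i, (x#y#p)!Suc (Suc i)})"
    unfolding sum.lessThan_Suc_shift by simp
  also have "\<dots> = c{x,y} + walk_len c (y#p)" by (simp add: walk_len_def)
  finally show ?thesis .
qed

lemma is_walk_append: "is_walk E (xs @ y # ys) \<longleftrightarrow> is_walk E (xs @ [y]) \<and> is_walk E (y # ys)"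
proof (induction xs)
  case Nil then show ?case by simp
next
  case (Cons a xs) then show ?case by (cases xs) (auto simp: is_walk_Cons2)
qed

lemma walk_len_append: "walk_len c (xs @ y # ys) = walk_len c (xs @ [y]) + walk_len c (y # ys)"
proof (induction xs)
  case Nil then show ?case by simp
next
  case (Cons a xs) then show ?case by (cases xs) (auto simp: walk_len_Cons2)
qed

lemma walk_len_nonneg:
  assumes "is_walk E p" "\<forall>e\<in>E. c e \<ge> 0"
  shows "walk_len c p \<ge> 0"
  using assms unfolding walk_len_def is_walk_def by (auto intro!: sum_nonneg)

lemma walk_joined: "is_walk F p \<Longrightarrow> joined F (hd p) (last p)"
proof (induction p)
  case Nil then show ?case by simp
next
  case (Cons a p)
  show ?case
  proof (cases p)
    case Nil then show ?thesis by simp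
  next
    case (Cons b q)
    with Cons.prems have "{a,b} \<in> F" "is_walk F p" by (auto simp: is_walk_Cons2)
    with Cons.IH Cons show ?thesis by (auto intro: joined_trans joined_edge)
  qed
qed

lemma walk_mono: "is_walk E p \<Longrightarrow> E \<subseteq> F \<Longrightarrow> is_walk F p"
  unfolding is_walk_def by blast

lemma walk_rev: "is_walk E p \<Longrightarrow> is_walk E (rev p) \<and> walk_len c (rev p) = walk_len c p"
proof (induction p)
  case Nil then show ?case by simp
next
  case (Cons a p)
  show ?case
  proof (cases p)
    case Nil then show ?thesis by simp
  next
    case (Cons b q)
    with Cons.prems have e: "{a,b} \<in> E" "is_walk E p" by (auto simp: is_walk_Cons2)
    have r: "rev (a#p) = rev q @ b # [a]" using Cons by simp
    have "is_walk E (rev q @ b # [a])"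
      using Cons.IH[OF e(2)] Cons e is_walk_append[of E "rev q" b "[a]"] by (simp add: is_walk_Cons2 insert_commute)
    moreover have "walk_len c (rev q @ b # [a]) = walk_len c (a#p)"
      using Cons.IH[OF e(2)] Cons walk_len_append[of c "rev q" b "[a]"] by (simp add: walk_len_Cons2 insert_commute)
    ultimately show ?thesis using r by simp
  qed
qed

lemma joined_walk: "joined F u v \<Longrightarrow> \<exists>p. is_walk F p \<and> hd p = u \<and> last p = v"
  unfolding joined_def
proof (induction rule: rtrancl_induct)
  case base then show ?case by (intro exI[of _ "[u]"]) simp
next
  case (step y z)
  then obtain p where p: "is_walk F p" "hd p = u" "last p = y" by blast
  then have ne: "p \<noteq> []" by auto
  then have pe: "p = butlast p @ [y]" using p(3) by (metis append_butlast_last_id)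
  have e: "{y,z} \<in> F" using step by simp
  have "is_walk F (butlast p @ y # [z])"
    using is_walk_append[of F "butlast p" y "[z]"] pe p(1) e by (simp add: is_walk_Cons2)
  moreover have "butlast p @ y # [z] = p @ [z]" using pe by (metis append_Cons append_Nil append_assoc)
  ultimately have "is_walk F (p @ [z])" by simp
  moreover have "hd (p @ [z]) = u" using p ne by simp
  ultimately show ?case by (intro exI[of _ "p @ [z]"]) simp
qed

lemma walk_shorten:
  assumes "is_walk E p" "\<forall>e\<in>E. c e \<ge> 0"
  shows "\<exists>q. is_walk E q \<and> distinct q \<and> hd q = hd p \<and> last q = last p \<and> walk_len c q \<le> walk_len c p"
  using assms(1)
proof (induction "length p" arbitrary: p rule: less_induct)
  case less
  show ?case
  proof (cases "distinct p")
    case True then show ?thesis using less.prems by blast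
  next
    case False
    obtain xs ys zs y where p: "p = xs@[y]@ys@[y]@zs" using not_distinct_decomp[OF False] by auto
    have p2: "p = xs @ y # (ys @ y # zs)" using p by simp
    have pw: "is_walk E (xs @ y # (ys @ y # zs))" using less.prems p2 by simp
    have w1: "is_walk E (xs@[y])" and w23: "is_walk E (y # (ys @ y # zs))"
      using pw is_walk_append[of E xs y "ys @ y # zs"] by simp_all
    have w23': "is_walk E ((y # ys) @ y # zs)" using w23 by simp
    have w: "is_walk E (xs@[y])" "is_walk E ((y#ys)@[y])" "is_walk E (y#zs)"
      using w1 w23' is_walk_append[of E "y#ys" y zs] by simp_all
    have l: "walk_len c p = walk_len c (xs@[y]) + walk_len c ((y#ys)@[y]) + walk_len c (y#zs)"
      unfolding p2 using walk_len_append[of c "y#ys" y zs] walk_len_append[of c xs y "ys @ y # zs"] by simp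
    define q0 where "q0 = xs @ y # zs"
    have wq: "is_walk E q0" using w is_walk_append[of E xs y zs] by (simp add: q0_def)
    have lq: "walk_len c q0 \<le> walk_len c p"
      using l walk_len_nonneg[OF w(2) assms(2)] walk_len_append[of c xs y zs] by (simp add: q0_def)
    have hq: "hd q0 = hd p" "last q0 = last p" by (simp_all add: q0_def p hd_append)
    have "length q0 < length p" unfolding q0_def p by simp
    from less.hyps[OF this wq] obtain q where
      "is_walk E q \<and> distinct q \<and> hd q = hd q0 \<and> last q = last q0 \<and> walk_len c q \<le> walk_len c q0" by blast
    then show ?thesis using hq lq by auto
  qed
qed

lemma path_uses_mono: "path_uses P u v e \<Longrightarrow> P \<subseteq> F \<Longrightarrow> path_uses F u v e"
  unfolding path_uses_def using walk_mono by blast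

lemma not_joined_path_uses:
  assumes "joined P u v" "\<not> joined (P - {e}) u v"
  shows "path_uses P u v e"
proof -
  obtain p where p: "is_walk P p" "hd p = u" "last p = v" using joined_walk[OF assms(1)] by blast
  from walk_shorten[OF p(1), of "\<lambda>_. 0"] obtain q where
    q: "is_walk P q" "distinct q" "hd q = u" "last q = v" using p by auto
  show ?thesis
  proof (rule ccontr)
    assume n: "\<not> path_uses P u v e"
    have "is_walk (P - {e}) q"
      using q n unfolding path_uses_def is_walk_def by blast
    from walk_joined[OF this] q assms(2) show False by simp
  qed
qed




lemma network_edge: "network V E c \<Longrightarrow> e \<in> E \<Longrightarrow> \<exists>u v. u\<in>V \<and> v\<in>V \<and> u\<noteq>v \<and> e = {u,v}"
  unfolding network_def by blast

lemma network_nonneg: "network V E c \<Longrightarrow> \<forall>e\<in>E. c e \<ge> 0"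
  unfolding network_def by (simp add: less_imp_le)

lemma hat_E_mem: "e \<in> hat_E V \<longleftrightarrow> (\<exists>u v. u\<in>V \<and> v\<in>V \<and> u\<noteq>v \<and> e = {u,v})"
  unfolding hat_E_def by blast

lemma hat_E_I: "u\<in>V \<Longrightarrow> v\<in>V \<Longrightarrow> u\<noteq>v \<Longrightarrow> {u,v} \<in> hat_E V"
  unfolding hat_E_def by blast

lemma finite_hat_E: "finite V \<Longrightarrow> finite (hat_E V)"
proof -
  assume "finite V"
  moreover have "hat_E V \<subseteq> Pow V" unfolding hat_E_def by auto
  ultimately show ?thesis using finite_subset by blast
qed

lemma E_sub_hat: assumes "network V E c" shows "E \<subseteq> hat_E V"
proof
  fix e assume "e \<in> E"
  then obtain u v where "u\<in>V" "v\<in>V" "u\<noteq>v" "e = {u,v}" using network_edge[OF assms] by blast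
  then show "e \<in> hat_E V" by (simp add: hat_E_I)
qed

lemma walk_vertices:
  assumes "is_walk E p" "2 \<le> length p"
  shows "set p \<subseteq> \<Union>E"
proof
  fix x assume "x \<in> set p"
  then obtain i where i: "i < length p" "x = p ! i" by (auto simp: in_set_conv_nth)
  show "x \<in> \<Union>E"
  proof (cases "Suc i < length p")
    case True
    then have "{p!i, p!Suc i} \<in> E" using assms(1) unfolding is_walk_def by blast
    then show ?thesis using i by blast
  next
    case False
    then obtain j where j: "i = Suc j" using assms(2) i by (cases i) auto
    then have "{p!j, p!Suc j} \<in> E" using assms(1) i unfolding is_walk_def by blast
    then show ?thesis using i j by blast
  qed
qed

lemma hatc_props:
  assumes net: "network V E c" and con: "connected_net V E" and e: "e \<in> hat_E V"
  shows "\<exists>p. is_walk E p \<and> {hd p, last p} = e \<and> hat_c E c e = walk_len c p"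
    and "\<And>q. is_walk E q \<Longrightarrow> {hd q, last q} = e \<Longrightarrow> hat_c E c e \<le> walk_len c q"
proof -
  obtain u v where uv: "u\<in>V" "v\<in>V" "u\<noteq>v" "e = {u,v}" using e unfolding hat_E_def by blast
  have nn: "\<forall>e\<in>E. c e \<ge> 0" using network_nonneg[OF net] .
  define S where "S = {walk_len c p | p. is_walk E p \<and> {hd p, last p} = e}"
  define D where "D = {p. is_walk E p \<and> distinct p \<and> {hd p, last p} = e}"
  have DV: "D \<subseteq> {xs. set xs \<subseteq> V \<and> distinct xs}"
  proof
    fix p assume p: "p \<in> D"
    then have w: "is_walk E p" "distinct p" "{hd p, last p} = {u,v}" using uv by (auto simp: D_def)
    then have "hd p \<noteq> last p" using uv(3) by (auto simp: doubleton_eq_iff)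
    moreover have "p \<noteq> []" using w by auto
    ultimately have "2 \<le> length p" by (cases p; cases "tl p") auto
    then have "set p \<subseteq> \<Union>E" using walk_vertices w by blast
    also have "\<Union>E \<subseteq> V" using network_edge[OF net] by blast
    finally show "p \<in> {xs. set xs \<subseteq> V \<and> distinct xs}" using w by simp
  qed
  have "finite V" using net unfolding network_def by blast
  then have fD: "finite D" by (rule finite_subset[OF DV finite_subset_distinct])
  have "joined E u v" using con uv(1,2) unfolding connected_net_def by blast
  from joined_walk[OF this] obtain p0 where p0: "is_walk E p0" "hd p0 = u" "last p0 = v"
    by blast
  have short: "\<exists>q\<in>D. walk_len c q \<le> walk_len c p" if pw: "is_walk E p" "{hd p, last p} = e" for p
  proof -
    obtain q where q: "is_walk E q" "distinct q" "hd q = hd p" "last q = last p" "walk_len c q \<le> walk_len c p"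
      using walk_shorten[OF pw(1) nn] by blast
    then have "q \<in> D" using pw(2) unfolding D_def by simp
    then show ?thesis using q(5) by blast
  qed
  have "{hd p0, last p0} = e" using p0 uv by simp
  then have "D \<noteq> {}" using short[OF p0(1)] by blast
  define m where "m = Min (walk_len c ` D)"
  have mD: "m \<in> walk_len c ` D" unfolding m_def using fD \<open>D \<noteq> {}\<close> by (intro Min_in) auto
  have mS: "m \<in> S" using mD unfolding S_def D_def by blast
  have mle: "m \<le> s" if sS: "s \<in> S" for s
  proof -
    obtain p where p: "is_walk E p" "{hd p, last p} = e" "s = walk_len c p" using sS unfolding S_def by blast
    obtain q where "q \<in> D" "walk_len c q \<le> walk_len c p" using short[OF p(1,2)] by blast
    moreover have "m \<le> walk_len c q" unfolding m_def using fD \<open>q \<in> D\<close> by (intro Min_le) auto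
    ultimately show ?thesis using p by simp
  qed
  have hS: "hat_c E c e = m" unfolding hat_c_def S_def[symmetric] by (rule cInf_eq_minimum[OF mS mle])
  show "\<exists>p. is_walk E p \<and> {hd p, last p} = e \<and> hat_c E c e = walk_len c p"
    using mD hS unfolding D_def by blast
  show "\<And>q. is_walk E q \<Longrightarrow> {hd q, last q} = e \<Longrightarrow> hat_c E c e \<le> walk_len c q"
    using mle hS unfolding S_def by blast
qed

lemma hatc_nonneg:
  assumes "network V E c" "connected_net V E" "e \<in> hat_E V"
  shows "hat_c E c e \<ge> 0"
proof -
  obtain p where p: "is_walk E p" "hat_c E c e = walk_len c p" using hatc_props(1)[OF assms] by blast
  have "walk_len c p \<ge> 0" by (rule walk_len_nonneg[OF p(1) network_nonneg[OF assms(1)]])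
  then show ?thesis using p(2) by linarith
qed

lemma hatc_le_c:
  assumes net: "network V E c" and con: "connected_net V E" and e: "e \<in> E"
  shows "hat_c E c e \<le> c e"
proof -
  obtain u v where uv: "u\<in>V" "v\<in>V" "u\<noteq>v" "e = {u,v}" using network_edge[OF net e] by blast
  have w: "is_walk E [u,v]" using e uv(4) is_walk_Cons2[of E u v "[]"] by simp
  have eh: "e \<in> hat_E V" using E_sub_hat[OF net] e by blast
  have hl: "{hd [u,v], last [u,v]} = e" using uv(4) by simp
  have "hat_c E c e \<le> walk_len c [u,v]"
    by (rule hatc_props(2)[OF net con eh w hl])
  moreover have "walk_len c [u,v] = c {u,v}" using walk_len_Cons2[of c u v "[]"] by simp
  ultimately show ?thesis using uv(4) by simp
qed

lemma walk_orient:
  assumes "is_walk E p" "{hd p, last p} = {s,t}" "s \<noteq> t"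
  shows "\<exists>q. is_walk E q \<and> hd q = s \<and> last q = t \<and> walk_len c q = walk_len c p"
proof (cases "hd p = s")
  case True
  then have "last p = t" using assms(2,3) by (auto simp: doubleton_eq_iff)
  then show ?thesis using True assms(1) by blast
next
  case False
  then have "hd p = t" "last p = s" using assms(2,3) by (auto simp: doubleton_eq_iff)
  moreover have "p \<noteq> []" using assms(1) by auto
  ultimately show ?thesis using walk_rev[OF assms(1), of c]
    by (intro exI[of _ "rev p"]) (simp add: hd_rev last_rev)
qed



lemma hatc_triangle:
  assumes net: "network V E c" and con: "connected_net V E"
    and V: "a\<in>V" "x\<in>V" "b\<in>V" "a\<noteq>x" "x\<noteq>b" "a\<noteq>b"
  shows "hat_c E c {a,b} \<le> hat_c E c {a,x} + hat_c E c {x,b}"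
proof -
  have h1: "{a,x} \<in> hat_E V" "{x,b} \<in> hat_E V" "{a,b} \<in> hat_E V" using V by (simp_all add: hat_E_I)
  obtain p1 where p1: "is_walk E p1" "{hd p1, last p1} = {a,x}" "hat_c E c {a,x} = walk_len c p1"
    using hatc_props(1)[OF net con h1(1)] by blast
  obtain p2 where p2: "is_walk E p2" "{hd p2, last p2} = {x,b}" "hat_c E c {x,b} = walk_len c p2"
    using hatc_props(1)[OF net con h1(2)] by blast
  obtain q1 where q1: "is_walk E q1" "hd q1 = a" "last q1 = x" "walk_len c q1 = walk_len c p1"
    using walk_orient[OF p1(1,2) V(4)] by blast
  obtain q2 where q2: "is_walk E q2" "hd q2 = x" "last q2 = b" "walk_len c q2 = walk_len c p2"
    using walk_orient[OF p2(1,2) V(5)] by blast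
  obtain t2 where t2: "q2 = x # t2" using q2 by (cases q2) auto
  have ne1: "q1 \<noteq> []" using q1 by auto
  have q1e: "q1 = butlast q1 @ [x]" using q1(3) ne1 by (metis append_butlast_last_id)
  define q where "q = butlast q1 @ x # t2"
  have wq: "is_walk E q" using is_walk_append[of E "butlast q1" x t2] q1(1) q2(1) t2 q1e[symmetric] by (simp add: q_def)
  have lq: "walk_len c q = walk_len c q1 + walk_len c q2"
    using walk_len_append[of c "butlast q1" x t2] q1e[symmetric] t2 by (simp add: q_def)
  have "q = q1 @ t2" using q1e q_def by (metis append_Cons append_Nil append_assoc)
  then have hq: "hd q = a" using q1 ne1 by simp
  have lsq: "last q = b" using q2 t2 by (simp add: q_def)
  have "hat_c E c {a,b} \<le> walk_len c q" by (rule hatc_props(2)[OF net con h1(3) wq]) (simp add: hq lsq)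
  then show ?thesis using lq q1(4) q2(4) p1(3) p2(3) by linarith
qed




lemma comp_time_set: "distinct es \<Longrightarrow> comp_time c es k = sum c (set (take k es))"
  unfolding comp_time_def by (simp add: sum_list_distinct_conv_sum_set)

lemma conn_time_eq:
  assumes "joined (set es) u v"
  shows "\<exists>k. joined (set (take k es)) u v \<and> conn_time c es (u,v) = comp_time c es k"
proof -
  let ?k = "LEAST k. joined (set (take k es)) u v"
  have "joined (set (take ?k es)) u v" by (rule LeastI[of _ "length es"]) (simp add: assms)
  then show ?thesis unfolding conn_time_def by auto
qed

lemma conn_time_le:
  assumes "distinct es" "\<forall>e\<in>set es. c e \<ge> 0" "joined (set (take k es)) u v"
  shows "conn_time c es (u,v) \<le> comp_time c es k"
proof -
  let ?k = "LEAST k. joined (set (take k es)) u v"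
  have le: "?k \<le> k" by (rule Least_le) (rule assms(3))
  have sub: "set (take ?k es) \<subseteq> set (take k es)" by (rule set_take_subset_set_take[OF le])
  have nn: "\<forall>b\<in>set (take k es). c b \<ge> 0" using assms(2) in_set_takeD by fast
  have "sum c (set (take ?k es)) \<le> sum c (set (take k es))"
    by (rule sum_mono2[OF finite_set sub]) (use nn in blast)
  then show ?thesis using assms(1) unfolding conn_time_def by (simp add: comp_time_set)
qed

lemma dominate:
  assumes mo: "monotone_obj r \<Phi>" "length R = r"
    and f: "feasible_seq A R es" and d': "distinct es'" "set es' \<subseteq> A'" and nn: "\<forall>e\<in>A'. c' e \<ge> 0"
    and st: "\<And>k. \<exists>k'. (\<forall>(u,v)\<in>set R. joined (set (take k es)) u v \<longrightarrow> joined (set (take k' es')) u v)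
                 \<and> comp_time c' es' k' \<le> comp_time c es k"
  shows "feasible_seq A' R es' \<and> \<Phi> (conn_times c' R es') \<le> \<Phi> (conn_times c R es)"
proof -
  have nn': "\<forall>e\<in>set es'. c' e \<ge> 0" using d'(2) nn by blast
  have pt: "conn_time c' es' (u,v) \<le> conn_time c es (u,v)" if uv: "(u,v) \<in> set R" for u v
  proof -
    have "joined (set es) u v" using f uv unfolding feasible_seq_def by auto
    then obtain k where k: "joined (set (take k es)) u v" "conn_time c es (u,v) = comp_time c es k"
      using conn_time_eq[of es u v c] by blast
    obtain k' where k': "\<forall>(u,v)\<in>set R. joined (set (take k es)) u v \<longrightarrow> joined (set (take k' es')) u v"
      "comp_time c' es' k' \<le> comp_time c es k" using st by blast
    have "joined (set (take k' es')) u v" using k'(1) uv k(1) by auto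
    then have "conn_time c' es' (u,v) \<le> comp_time c' es' k'" by (rule conn_time_le[OF d'(1) nn'])
    then show ?thesis using k'(2) k(2) by simp
  qed
  have jo: "joined (set es') u v" if uv: "(u,v) \<in> set R" for u v
  proof -
    have "joined (set (take (length es) es)) u v" using f uv unfolding feasible_seq_def by auto
    then obtain k' where "joined (set (take k' es')) u v" using st[of "length es"] uv by blast
    then show ?thesis using joined_mono set_take_subset by metis
  qed
  have feas: "feasible_seq A' R es'" unfolding feasible_seq_def using d' jo by auto
  have "list_all2 (\<le>) (conn_times c' R es') (conn_times c R es)"
  proof (rule list_all2_all_nthI)
    show "length (conn_times c' R es') = length (conn_times c R es)" by (simp add: conn_times_def)
    fix i assume "i < length (conn_times c' R es')"
    then have i: "i < length R" by (simp add: conn_times_def)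
    obtain u v where uv: "R ! i = (u,v)" by (cases "R ! i")
    have "(u,v) \<in> set R" using i uv nth_mem by metis
    then show "conn_times c' R es' ! i \<le> conn_times c R es ! i"
      using pt i uv by (simp add: conn_times_def)
  qed
  then have "\<Phi> (conn_times c' R es') \<le> \<Phi> (conn_times c R es)"
    using mo unfolding monotone_obj_def by (simp add: conn_times_def)
  with feas show ?thesis by simp
qed

fun nub :: "'b set \<Rightarrow> 'b list \<Rightarrow> 'b list" where
  "nub S [] = []"
| "nub S (x#xs) = (if x \<in> S then nub S xs else x # nub (insert x S) xs)"

lemma nub_append: "nub S (xs @ ys) = nub S xs @ nub (S \<union> set xs) ys"
proof (induction xs arbitrary: S)
  case Nil then show ?case by simp
next
  case (Cons a xs)
  show ?case
  proof (cases "a \<in> S")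
    case True
    then have e: "S \<union> set (a#xs) = S \<union> set xs" by auto
    show ?thesis unfolding e using True Cons.IH by simp
  next
    case False
    then have e: "S \<union> set (a#xs) = insert a S \<union> set xs" by auto
    show ?thesis unfolding e using False Cons.IH[of "insert a S"] by simp
  qed
qed

lemma set_nub: "set (nub S xs) = set xs - S"
  by (induction xs arbitrary: S) auto

lemma distinct_nub: "distinct (nub S xs)"
  by (induction xs arbitrary: S) (auto simp: set_nub)

lemma sum_set_le_sum_list: "\<forall>e\<in>set xs. c e \<ge> (0::real) \<Longrightarrow> sum c (set xs) \<le> sum_list (map c xs)"
proof (induction xs)
  case Nil then show ?case by simp
next
  case (Cons x xs)
  then have "sum c (set xs) \<le> sum_list (map c xs)" "c x \<ge> 0" by auto
  show ?case
  proof (cases "x \<in> set xs")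
    case True
    then have "set (x#xs) = set xs" by auto
    then show ?thesis using \<open>sum c (set xs) \<le> sum_list (map c xs)\<close> \<open>c x \<ge> 0\<close> by simp
  next
    case False
    then show ?thesis using \<open>sum c (set xs) \<le> sum_list (map c xs)\<close> by simp
  qed
qed

lemma take_map_filter:
  "take (length (filter P (take k xs))) (map g (filter P xs)) = map g (filter P (take k xs))"
proof -
  have "map g (filter P xs) = map g (filter P (take k xs)) @ map g (filter P (drop k xs))"
    by (metis append_take_drop_id filter_append map_append)
  then show ?thesis by simp
qed

lemma reduce:
  assumes mo: "monotone_obj r \<Phi>" "length R = r"
    and f: "feasible_seq A R es" and nn: "\<forall>e\<in>A. c e \<ge> 0"
    and e1: "e1 \<in> set es"
    and gi: "inj_on g (set es - {e1})" and gA: "g ` (set es - {e1}) \<subseteq> A"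
    and st: "\<And>k. (\<forall>(u,v)\<in>set R. joined (set (take k es)) u v \<longrightarrow> joined (g ` (set (take k es) - {e1})) u v)
               \<and> sum c (g ` (set (take k es) - {e1})) \<le> sum c (set (take k es))"
  shows "\<exists>es'. feasible_seq A R es' \<and> length es' < length es \<and> \<Phi> (conn_times c R es') \<le> \<Phi> (conn_times c R es)"
proof -
  define es' where "es' = map g (filter (\<lambda>e. e \<noteq> e1) es)"
  have sf: "set (filter (\<lambda>e. e \<noteq> e1) es) = set es - {e1}" by auto
  have de: "distinct es" using f unfolding feasible_seq_def by blast
  have d': "distinct es'" unfolding es'_def using gi sf de by (simp add: distinct_map)
  have s': "set es' \<subseteq> A" unfolding es'_def using gA sf by simp
  have l': "length es' < length es" unfolding es'_def using e1 by (simp add: length_filter_less)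
  have "feasible_seq A R es' \<and> \<Phi> (conn_times c R es') \<le> \<Phi> (conn_times c R es)"
  proof (rule dominate[OF mo f d' s' nn])
    fix k
    define k' where "k' = length (filter (\<lambda>e. e \<noteq> e1) (take k es))"
    have tk: "take k' es' = map g (filter (\<lambda>e. e \<noteq> e1) (take k es))"
      unfolding k'_def es'_def by (rule take_map_filter)
    have stk: "set (take k' es') = g ` (set (take k es) - {e1})" unfolding tk by auto
    have "comp_time c es' k' = sum c (set (take k' es'))" by (rule comp_time_set[OF d'])
    also have "\<dots> \<le> sum c (set (take k es))" using st[of k] stk by simp
    also have "\<dots> = comp_time c es k" by (rule comp_time_set[OF de, symmetric])
    finally show "\<exists>k'. (\<forall>(u,v)\<in>set R. joined (set (take k es)) u v \<longrightarrow> joined (set (take k' es')) u v)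
                 \<and> comp_time c es' k' \<le> comp_time c es k"
      using st[of k] stk by (intro exI[of _ k']) auto
  qed
  then show ?thesis using l' by blast
qed




lemma forest_D:
  assumes "forest F" "{x,y} \<in> F"
  shows "\<not> joined (F - {{x,y}}) x y"
proof -
  have "\<forall>x' y'. {x,y} = {x',y'} \<longrightarrow> \<not> joined (F - {{x,y}}) x' y'"
    using assms(1) assms(2) unfolding forest_def by (rule bspec)
  then show ?thesis by blast
qed

lemma forest_subset: "forest F \<Longrightarrow> G \<subseteq> F \<Longrightarrow> forest G"
proof -
  assume fo: "forest F" and GF: "G \<subseteq> F"
  show "forest G" unfolding forest_def
  proof (intro ballI allI impI notI)
    fix e x y assume e: "e \<in> G" "e = {x,y}" and j: "joined (G - {e}) x y"
    have eF: "e \<in> F" using GF e(1) by (rule subsetD)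
    have "joined (F - {e}) x y" by (rule joined_mono[OF j Diff_mono[OF GF order_refl]])
    then show False using forest_D[OF fo, of x y] eF e(2) by simp
  qed
qed

lemma forest_insert:
  assumes fo: "forest F" and nj: "\<not> joined F x y"
  shows "forest (insert {x,y} F)"
  unfolding forest_def
proof (intro ballI allI impI notI)
  fix f a b assume f: "f \<in> insert {x,y} F" "f = {a,b}" and j: "joined (insert {x,y} F - {f}) a b"
  show False
  proof (cases "f = {x,y}")
    case True
    have xF: "{x,y} \<notin> F" using nj joined_edge[of x y F] by blast
    then have "insert {x,y} F - {f} = F" using True by (simp add: Diff_insert_absorb)
    then have "joined F a b" using j by simp
    moreover have "(a = x \<and> b = y) \<or> (a = y \<and> b = x)" using True f(2) by (auto simp: doubleton_eq_iff)
    ultimately show False using nj joined_sym by metis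
  next
    case False
    then have fF: "f \<in> F" using f by simp
    have "insert {x,y} F - {f} = insert {x,y} (F - {f})" using False by (simp add: insert_Diff_if)
    then have "joined (insert {x,y} (F - {f})) a b" using j by simp
    from joined_insert_cases[OF this] have
      c: "joined (F-{f}) a b \<or> (joined (F-{f}) a x \<and> joined (F-{f}) y b) \<or> (joined (F-{f}) a y \<and> joined (F-{f}) x b)" .
    have n1: "\<not> joined (F - {f}) a b" using forest_D[OF fo, of a b] fF f(2) by simp
    have ab: "joined F a b" using joined_edge[of a b F] fF f(2) by simp
    have m: "joined F s t" if "joined (F-{f}) s t" for s t by (rule joined_mono[OF that Diff_subset])
    have "joined F x y"
    proof (cases "joined (F-{f}) a x \<and> joined (F-{f}) y b")
      case True
      then have xa: "joined F x a" and "joined F b y"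
        using joined_sym[OF m[of a x]] joined_sym[OF m[of y b]] by blast+
      have "joined F x b" by (rule joined_trans[OF xa ab])
      then show ?thesis using \<open>joined F b y\<close> by (rule joined_trans)
    next
      case False
      then have "joined (F-{f}) a y" "joined (F-{f}) x b" using c n1 by blast+
      then have xb: "joined F x b" and ay: "joined F a y" using m by blast+
      have "joined F b a" using ab by (rule joined_sym)
      then have "joined F x a" by (rule joined_trans[OF xb])
      then show ?thesis using ay by (rule joined_trans)
    qed
    then show False using nj by simp
  qed
qed

lemma forest_empty: "forest {}"
  unfolding forest_def by simp

lemma forest_seq:
  "distinct es \<Longrightarrow> (\<forall>e\<in>set es. \<exists>x y. e = {x,y}) \<Longrightarrow>
   (\<forall>j<length es. \<forall>x y. es!j = {x,y} \<longrightarrow> \<not> joined (set (take j es)) x y) \<Longrightarrow> forest (set es)"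
proof (induction es rule: rev_induct)
  case Nil then show ?case by (simp add: forest_empty)
next
  case (snoc e es)
  have h: "\<forall>j<length es. \<forall>x y. es!j = {x,y} \<longrightarrow> \<not> joined (set (take j es)) x y"
  proof (intro allI impI)
    fix j x y assume j: "j < length es" "es ! j = {x,y}"
    then have "(es @ [e]) ! j = {x,y}" "take j (es @ [e]) = take j es" by (simp_all add: nth_append)
    then show "\<not> joined (set (take j es)) x y" using snoc.prems(3) j(1) by (metis length_append_singleton less_SucI)
  qed
  have fo: "forest (set es)" using snoc.IH snoc.prems h by simp
  obtain x y where xy: "e = {x,y}" using snoc.prems(2) by auto
  have "(es @ [e]) ! length es = {x,y}" "take (length es) (es @ [e]) = es" using xy by simp_all
  then have "\<not> joined (set es) x y" using snoc.prems(3) by (metis length_append_singleton lessI)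
  from forest_insert[OF fo this] show ?case using xy by simp
qed

lemma card2_finite: "card e = 2 \<Longrightarrow> finite e"
  using card_gt_0_iff by fastforce

lemma forest_card:
  "finite F \<Longrightarrow> forest F \<Longrightarrow> (\<forall>e\<in>F. card e = 2) \<Longrightarrow> F \<noteq> {} \<Longrightarrow> card F < card (\<Union>F)"
proof (induction "card F" arbitrary: F rule: less_induct)
  case less
  note fin = less.prems(1) and fo = less.prems(2) and c2 = less.prems(3)
  obtain e0 where e0: "e0 \<in> F" using less.prems(4) by blast
  obtain x y where xy: "e0 = {x,y}" "x\<noteq>y" using c2 e0 card_2_iff by metis
  define F0 where "F0 = F - {e0}"
  have nj: "\<not> joined F0 x y" using forest_D[OF fo, of x y] e0 xy(1) unfolding F0_def by simp
  define C where "C = {z. joined F0 x z}"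
  define F1 where "F1 = {e\<in>F0. e \<inter> C \<noteq> {}}"
  define F2 where "F2 = F0 - F1"
  have closed: "e \<subseteq> C" if "e \<in> F1" for e
  proof -
    have eF0: "e \<in> F0" and "e \<inter> C \<noteq> {}" using that F1_def by auto
    then obtain z where z: "z \<in> e" "joined F0 x z" using C_def by blast
    have "card e = 2" using c2 eF0 F0_def by auto
    then obtain s t where st: "e = {s,t}" using card_2_iff by metis
    have "joined F0 s t" using eF0 st joined_edge[of s t F0] by simp
    moreover have "z = s \<or> z = t" using z(1) st by simp
    ultimately have "joined F0 x s \<and> joined F0 x t"
    proof (cases "z = s")
      case True
      assume "joined F0 s t"
      then show ?thesis using z(2) True joined_trans[of F0 x s t] by simp
    next
      case False
      assume st': "joined F0 s t" "z = s \<or> z = t"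
      then have zt: "z = t" using False by simp
      have "joined F0 t s" using st'(1) by (rule joined_sym)
      then show ?thesis using z(2) zt joined_trans[of F0 x t s] by simp
    qed
    then show ?thesis using st C_def by auto
  qed
  have U1: "\<Union>F1 \<subseteq> C" using closed by blast
  have U2: "\<Union>F2 \<inter> C = {}" unfolding F2_def F1_def by blast
  have xC: "x \<in> C" unfolding C_def by simp
  have yC: "y \<notin> C" unfolding C_def using nj by simp
  have f1: "finite F1" "finite F2" using fin unfolding F1_def F2_def F0_def by auto
  have sub: "F1 \<subseteq> F" "F2 \<subseteq> F" unfolding F1_def F2_def F0_def by auto
  have F0e: "F0 = F1 \<union> F2" "F1 \<inter> F2 = {}" unfolding F2_def F1_def by auto
  have cF: "card F = card F1 + card F2 + 1"
  proof -
    have "card F > 0" using fin e0 card_gt_0_iff by blast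
    then have "card F = card F0 + 1" unfolding F0_def using fin e0 by (simp add: card_Diff_singleton_if)
    moreover have "card F0 = card F1 + card F2" using F0e f1 card_Un_disjoint by metis
    ultimately show ?thesis by simp
  qed
  have finU: "finite (\<Union>F)" by (rule finite_Union[OF fin]) (use c2 card2_finite in blast)
  have b: "card G + 1 \<le> card (insert w (\<Union>G))" if G: "G \<subseteq> F" "G \<noteq> F" for G w
  proof (cases "G = {}")
    case True then show ?thesis by simp
  next
    case False
    have fG: "finite G" by (rule finite_subset[OF G(1) fin])
    have "G \<subset> F" using G by blast
    then have "card G < card F" by (rule psubset_card_mono[OF fin])
    moreover have "forest G" by (rule forest_subset[OF fo G(1)])
    moreover have "\<forall>e\<in>G. card e = 2" using c2 G(1) by blast
    ultimately have "card G < card (\<Union>G)" using less.hyps[OF _ fG _ _ False] by blast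
    moreover have "finite (\<Union>G)" by (rule finite_subset[OF Union_mono[OF G(1)] finU])
    ultimately show ?thesis by (simp add: card_insert_if)
  qed
  have "e0 \<notin> F1" "e0 \<notin> F2" unfolding F1_def F2_def F0_def by auto
  then have ne: "F1 \<noteq> F" "F2 \<noteq> F" using e0 by metis+
  have b1: "card F1 + 1 \<le> card (insert x (\<Union>F1))" by (rule b[OF sub(1) ne(1)])
  have b2: "card F2 + 1 \<le> card (insert y (\<Union>F2))" by (rule b[OF sub(2) ne(2)])
  have disj: "insert x (\<Union>F1) \<inter> insert y (\<Union>F2) = {}" using U1 U2 xC yC xy by blast
  have "x \<in> \<Union>F" "y \<in> \<Union>F" using e0 xy(1) by auto
  then have su: "insert x (\<Union>F1) \<union> insert y (\<Union>F2) \<subseteq> \<Union>F" using sub by blast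
  then have cm: "card (insert x (\<Union>F1) \<union> insert y (\<Union>F2)) \<le> card (\<Union>F)" by (rule card_mono[OF finU])
  have fi: "finite (insert x (\<Union>F1))" "finite (insert y (\<Union>F2))"
    using su finite_subset[OF _ finU] by blast+
  moreover have "card (insert x (\<Union>F1) \<union> insert y (\<Union>F2)) = card (insert x (\<Union>F1)) + card (insert y (\<Union>F2))"
    by (rule card_Un_disjoint[OF fi disj])
  ultimately show ?case using cF b1 b2 cm by linarith
qed

lemma handshake:
  assumes fin: "finite F" and c2: "\<forall>e\<in>F. card e = 2"
  shows "(\<Sum>v\<in>\<Union>F. card {e\<in>F. v\<in>e}) = 2 * card F"
proof -
  have finU: "finite (\<Union>F)" by (rule finite_Union[OF fin]) (use c2 card2_finite in blast)
  have "(\<Sum>v\<in>\<Union>F. card {e\<in>F. v\<in>e}) = (\<Sum>v\<in>\<Union>F. \<Sum>e\<in>F. if v\<in>e then 1 else 0)"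
  proof (rule sum.cong)
    fix v show "card {e\<in>F. v\<in>e} = (\<Sum>e\<in>F. if v\<in>e then 1 else 0)"
      using sum.inter_filter[OF fin, of "\<lambda>_. 1::nat" "\<lambda>e. v \<in> e"] by simp
  qed simp
  also have "\<dots> = (\<Sum>e\<in>F. \<Sum>v\<in>\<Union>F. if v\<in>e then 1 else 0)" by (rule sum.swap)
  also have "\<dots> = (\<Sum>e\<in>F. 2)"
  proof (rule sum.cong)
    fix e assume e: "e \<in> F"
    have "(\<Sum>v\<in>\<Union>F. if v\<in>e then 1 else (0::nat)) = card {v\<in>\<Union>F. v\<in>e}"
      using sum.inter_filter[OF finU, of "\<lambda>_. 1::nat" "\<lambda>v. v \<in> e"] by simp
    also have "{v\<in>\<Union>F. v\<in>e} = e" using e by blast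
    finally show "(\<Sum>v\<in>\<Union>F. if v\<in>e then 1 else (0::nat)) = 2" using c2 e by simp
  qed simp
  also have "\<dots> = 2 * card F" by simp
  finally show ?thesis .
qed




definition wedges :: "'a list \<Rightarrow> 'a set list" where
  "wedges p = map (\<lambda>i. {p!i, p!Suc i}) [0..<length p - 1]"

lemma set_wedges: "set (wedges p) = {{p!i, p!Suc i} | i. Suc i < length p}"
  unfolding wedges_def by auto

lemma wedges_sub: "is_walk E p \<Longrightarrow> set (wedges p) \<subseteq> E"
  unfolding set_wedges is_walk_def by blast

lemma walk_wedges: "is_walk E p \<Longrightarrow> is_walk (set (wedges p)) p"
  unfolding is_walk_def set_wedges by blast

lemma walk_len_wedges: "walk_len c p = sum_list (map c (wedges p))"
proof -
  have "sum_list (map c (wedges p)) = sum_list (map (\<lambda>i. c {p!i, p!Suc i}) [0..<length p - 1])"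
    unfolding wedges_def by (simp add: comp_def)
  also have "\<dots> = (\<Sum>i\<in>{0..<length p - 1}. c {p!i, p!Suc i})"
    by (simp add: interv_sum_list_conv_sum_set_nat)
  finally show ?thesis unfolding walk_len_def by (simp add: lessThan_atLeast0)
qed

lemma sum_list_map_concat: "sum_list (map c (concat xss)) = sum_list (map (\<lambda>xs. sum_list (map c xs)) xss)"
  by (induction xss) auto

lemma finite_feasible: "finite A \<Longrightarrow> finite {es. feasible_seq A R es}"
  by (rule finite_subset[OF _ finite_subset_distinct[of A]]) (auto simp: feasible_seq_def)

lemma Zstar_le:
  assumes "finite A" "feasible_seq A R es"
  shows "Zstar A c R \<Phi> \<le> \<Phi> (conn_times c R es)"
proof -
  have "finite {es. feasible_seq A R es}" by (rule finite_feasible[OF assms(1)])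
  then have "bdd_below ((\<lambda>es. \<Phi> (conn_times c R es)) ` {es. feasible_seq A R es})"
    by (intro bdd_below_finite finite_imageI)
  then show ?thesis unfolding Zstar_def by (rule cInf_lower[rotated]) (use assms(2) in simp)
qed

lemma Zstar_attained:
  assumes "finite A" "feasible_seq A R es0"
  shows "\<exists>es. feasible_seq A R es \<and> \<Phi> (conn_times c R es) = Zstar A c R \<Phi>"
proof -
  let ?X = "(\<lambda>es. \<Phi> (conn_times c R es)) ` {es. feasible_seq A R es}"
  have f: "finite ?X" using finite_feasible[OF assms(1)] by simp
  have ne: "?X \<noteq> {}" using assms(2) by blast
  have "Zstar A c R \<Phi> = Min ?X" unfolding Zstar_def by (rule cInf_eq_Min[OF f ne])
  moreover have "Min ?X \<in> ?X" by (rule Min_in[OF f ne])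
  ultimately show ?thesis by auto
qed

lemma Zstar_ge:
  assumes "feasible_seq A R es0" "\<And>es. feasible_seq A R es \<Longrightarrow> z \<le> \<Phi> (conn_times c R es)"
  shows "z \<le> Zstar A c R \<Phi>"
  unfolding Zstar_def
  by (rule cInf_greatest) (use assms in auto)

lemma part1:
  fixes V :: "'a set" and E :: "'a set set" and c :: "'a set \<Rightarrow> real"
    and R :: "('a \<times> 'a) list" and r :: nat and \<Phi> :: "real list \<Rightarrow> real"
  assumes net: "network V E c"
    and con: "connected_net V E"
    and lenR: "length R = r"
    and Rv: "\<forall>(u, v)\<in>set R. u \<in> V \<and> v \<in> V \<and> u \<noteq> v"
    and mo: "monotone_obj r \<Phi>"
  shows "Zstar E c R \<Phi> = Zstar (hat_E V) (hat_c E c) R \<Phi>"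
proof -
  define HE where "HE = hat_E V"
  define hc where "hc = hat_c E c"
  have finV: "finite V" using net unfolding network_def by blast
  have finHE: "finite HE" unfolding HE_def using finV by (rule finite_hat_E)
  have EHE: "E \<subseteq> HE" unfolding HE_def by (rule E_sub_hat[OF net])
  have finE: "finite E" using finite_subset[OF EHE finHE] .
  have hcnn: "\<forall>e\<in>HE. hc e \<ge> 0" unfolding HE_def hc_def using hatc_nonneg[OF net con] by blast
  have cnn: "\<forall>e\<in>E. c e \<ge> 0" by (rule network_nonneg[OF net])
  obtain esE where esE: "set esE = E" "distinct esE" using finite_distinct_list[OF finE] by blast
  have feasE: "feasible_seq E R esE"
    unfolding feasible_seq_def using esE con Rv unfolding connected_net_def by fastforce
  have low: "Zstar HE hc R \<Phi> \<le> Zstar E c R \<Phi>"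
  proof (rule Zstar_ge[OF feasE])
    fix es assume f: "feasible_seq E R es"
    have d: "distinct es" "set es \<subseteq> HE" using f EHE unfolding feasible_seq_def by auto
    have "feasible_seq HE R es \<and> \<Phi> (conn_times hc R es) \<le> \<Phi> (conn_times c R es)"
    proof (rule dominate[OF mo lenR f d hcnn])
      fix k
      have "comp_time hc es k \<le> comp_time c es k"
        unfolding comp_time_def
      proof (rule sum_list_mono)
        fix e assume "e \<in> set (take k es)"
        then have "e \<in> E" using f in_set_takeD unfolding feasible_seq_def by fast
        then show "hc e \<le> c e" unfolding hc_def by (rule hatc_le_c[OF net con])
      qed
      then show "\<exists>k'. (\<forall>(u,v)\<in>set R. joined (set (take k es)) u v \<longrightarrow> joined (set (take k' es)) u v)
                 \<and> comp_time hc es k' \<le> comp_time c es k" by blast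
    qed
    moreover have "Zstar HE hc R \<Phi> \<le> \<Phi> (conn_times hc R es)"
      by (rule Zstar_le[OF finHE]) (use calculation in blast)
    ultimately show "Zstar HE hc R \<Phi> \<le> \<Phi> (conn_times c R es)" by linarith
  qed
  have feasH: "feasible_seq HE R esE" using feasE EHE unfolding feasible_seq_def by auto
  obtain hs where hs: "feasible_seq HE R hs" "\<Phi> (conn_times hc R hs) = Zstar HE hc R \<Phi>"
    using Zstar_attained[OF finHE feasH] by blast
  have "\<forall>f\<in>HE. \<exists>p. is_walk E p \<and> {hd p, last p} = f \<and> hc f = walk_len c p"
    unfolding hc_def HE_def using hatc_props(1)[OF net con] by blast
  then obtain W where W: "\<And>f. f \<in> HE \<Longrightarrow> is_walk E (W f) \<and> {hd (W f), last (W f)} = f \<and> hc f = walk_len c (W f)"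
    by metis
  define L where "L k = concat (map (\<lambda>f. wedges (W f)) (take k hs))" for k
  define es where "es = nub {} (L (length hs))"
  have hsHE: "set hs \<subseteq> HE" and dhs: "distinct hs" using hs(1) unfolding feasible_seq_def by auto
  have LE: "set (L k) \<subseteq> E" for k
  proof
    fix e assume "e \<in> set (L k)"
    then obtain f where f: "f \<in> set (take k hs)" "e \<in> set (wedges (W f))" unfolding L_def by auto
    then have "f \<in> HE" using hsHE in_set_takeD by fast
    then show "e \<in> E" using W wedges_sub f(2) by blast
  qed
  have des: "distinct es" unfolding es_def by (rule distinct_nub)
  have sesE: "set es \<subseteq> E" unfolding es_def set_nub using LE by blast
  have "feasible_seq E R es \<and> \<Phi> (conn_times c R es) \<le> \<Phi> (conn_times hc R hs)"
  proof (rule dominate[OF mo lenR hs(1) des sesE cnn])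
    fix k
    define k' where "k' = length (nub {} (L k))"
    have Lsplit: "L (length hs) = L k @ concat (map (\<lambda>f. wedges (W f)) (drop k hs))"
      unfolding L_def by (metis append_take_drop_id concat_append map_append take_all order_refl)
    have tk: "take k' es = nub {} (L k)"
      unfolding es_def Lsplit nub_append k'_def by simp
    have stk: "set (take k' es) = set (L k)" unfolding tk set_nub by simp
    have "comp_time c es k' = sum c (set (L k))" using comp_time_set[OF des] stk by simp
    also have "\<dots> \<le> sum_list (map c (L k))"
      by (rule sum_set_le_sum_list) (use LE cnn in blast)
    also have "\<dots> = sum_list (map (\<lambda>f. sum_list (map c (wedges (W f)))) (take k hs))"
      unfolding L_def sum_list_map_concat by (simp add: comp_def)
    also have "\<dots> = sum_list (map hc (take k hs))"
    proof (rule arg_cong[where f = sum_list], rule map_cong[OF refl])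
      fix f assume "f \<in> set (take k hs)"
      then have "f \<in> HE" using hsHE in_set_takeD by fast
      then show "sum_list (map c (wedges (W f))) = hc f" using W walk_len_wedges by metis
    qed
    also have "\<dots> = comp_time hc hs k" unfolding comp_time_def ..
    finally have ct: "comp_time c es k' \<le> comp_time hc hs k" .
    have jj: "joined (set (L k)) u v" if "joined (set (take k hs)) u v" for u v
    proof -
      have "joined (set (L k)) (id u) (id v)"
      proof (rule joined_hom[OF _ that])
        fix s t assume st: "{s,t} \<in> set (take k hs)"
        then have fH: "{s,t} \<in> HE" using hsHE in_set_takeD by fast
        have Wf: "is_walk E (W {s,t})" "{hd (W {s,t}), last (W {s,t})} = {s,t}" using W[OF fH] by auto
        have "joined (set (wedges (W {s,t}))) (hd (W {s,t})) (last (W {s,t}))"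
          by (rule walk_joined[OF walk_wedges[OF Wf(1)]])
        moreover have "set (wedges (W {s,t})) \<subseteq> set (L k)" unfolding L_def using st by auto
        ultimately have j: "joined (set (L k)) (hd (W {s,t})) (last (W {s,t}))" by (rule joined_mono)
        have "(hd (W {s,t}) = s \<and> last (W {s,t}) = t) \<or> (hd (W {s,t}) = t \<and> last (W {s,t}) = s)"
          using Wf(2) by (auto simp: doubleton_eq_iff)
        then show "joined (set (L k)) (id s) (id t)" using j joined_sym by (metis id_apply)
      qed
      then show ?thesis by simp
    qed
    show "\<exists>k'. (\<forall>(u,v)\<in>set R. joined (set (take k hs)) u v \<longrightarrow> joined (set (take k' es)) u v)
                 \<and> comp_time c es k' \<le> comp_time hc hs k"
      using ct jj stk by (intro exI[of _ k']) auto
  qed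
  moreover have "Zstar E c R \<Phi> \<le> \<Phi> (conn_times c R es)"
    by (rule Zstar_le[OF finE]) (use calculation in blast)
  ultimately have "Zstar E c R \<Phi> \<le> Zstar HE hc R \<Phi>" using hs(2) by linarith
  with low show ?thesis unfolding HE_def hc_def by linarith
qed




lemma doubleton_cases: "{s,t} = {x,y} \<Longrightarrow> (s = x \<and> t = y) \<or> (s = y \<and> t = x)"
  by (auto simp: doubleton_eq_iff)

lemma joined_remove_edge:
  assumes j: "joined P u v" and xy: "joined (P - {{x,y}}) x y"
  shows "joined (P - {{x,y}}) u v"
proof -
  have "joined (P - {{x,y}}) (id u) (id v)"
  proof (rule joined_hom[OF _ j])
    fix s t assume st: "{s,t} \<in> P"
    show "joined (P - {{x,y}}) (id s) (id t)"
    proof (cases "{s,t} = {x,y}")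
      case True
      then have "(s = x \<and> t = y) \<or> (s = y \<and> t = x)" by (rule doubleton_cases)
      then show ?thesis using xy joined_sym by (metis id_apply)
    next
      case False
      then have "{s,t} \<in> P - {{x,y}}" using st by simp
      then show ?thesis using joined_edge by (metis id_apply)
    qed
  qed
  then show ?thesis by simp
qed

lemma distinct_take_mem:
  assumes d: "distinct es" and j: "j < length es"
  shows "es!j \<in> set (take k es) \<longleftrightarrow> j < k"
proof
  assume "es!j \<in> set (take k es)"
  then obtain i where i: "i < length (take k es)" "take k es ! i = es ! j" by (auto simp: in_set_conv_nth)
  then have "i < k" "i < length es" "es ! i = es ! j" by auto
  then have "i = j" using nth_eq_iff_index_eq[OF d _ j] by blast
  then show "j < k" using \<open>i < k\<close> by simp
next
  assume "j < k"
  then have "take k es ! j = es ! j" "j < length (take k es)" using j by auto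
  then show "es!j \<in> set (take k es)" by (metis nth_mem)
qed

lemma sum_remove_le:
  assumes "finite P" "\<forall>e\<in>P. h e \<ge> (0::real)"
  shows "sum h (P - {e}) \<le> sum h P"
  using assms by (simp add: sum_diff1)




lemma part2:
  fixes V :: "'a set" and E :: "'a set set" and c :: "'a set \<Rightarrow> real"
    and R :: "('a \<times> 'a) list" and r :: nat and \<Phi> :: "real list \<Rightarrow> real"
  assumes net: "network V E c"
    and con: "connected_net V E"
    and lenR: "length R = r" and r2: "r \<ge> 2"
    and Rv: "\<forall>(u, v)\<in>set R. u \<in> V \<and> v \<in> V \<and> u \<noteq> v"
    and mo: "monotone_obj r \<Phi>"
  shows "\<exists>F. r_forest (hat_E V) R F \<and>
         forest_value (hat_c E c) R \<Phi> F = Zstar (hat_E V) (hat_c E c) R \<Phi> \<and>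
         card (non_terminals R F) \<le> 2 * r - 2"
proof -
  define HE where "HE = hat_E V"
  define hc where "hc = hat_c E c"
  have finV: "finite V" using net unfolding network_def by blast
  have finHE: "finite HE" unfolding HE_def using finV by (rule finite_hat_E)
  have EHE: "E \<subseteq> HE" unfolding HE_def by (rule E_sub_hat[OF net])
  have finE: "finite E" using finite_subset[OF EHE finHE] .
  have hcnn: "\<forall>e\<in>HE. hc e \<ge> 0" unfolding HE_def hc_def using hatc_nonneg[OF net con] by blast
  obtain esE where esE: "set esE = E" "distinct esE" using finite_distinct_list[OF finE] by blast
  have feasH: "feasible_seq HE R esE"
    unfolding feasible_seq_def using esE con Rv EHE unfolding connected_net_def by fastforce
  define Zh where "Zh = Zstar HE hc R \<Phi>"
  define Opt where "Opt = {es. feasible_seq HE R es \<and> \<Phi> (conn_times hc R es) = Zh}"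
  obtain es0 where "es0 \<in> Opt" using Zstar_attained[OF finHE feasH] unfolding Opt_def Zh_def by blast
  then obtain es where es: "es \<in> Opt" and minl: "\<And>es'. es' \<in> Opt \<Longrightarrow> length es \<le> length es'"
    using ex_has_least_nat[of "\<lambda>es. es \<in> Opt" es0 length] by blast
  have fes: "feasible_seq HE R es" and ves: "\<Phi> (conn_times hc R es) = Zh" using es Opt_def by auto
  have des: "distinct es" and sHE: "set es \<subseteq> HE" and jR: "\<forall>(u,v)\<in>set R. joined (set es) u v"
    using fes unfolding feasible_seq_def by auto
  have noRed: False if nr: "feasible_seq HE R es'" "length es' < length es"
    "\<Phi> (conn_times hc R es') \<le> \<Phi> (conn_times hc R es)" for es'
  proof -
    have "Zh \<le> \<Phi> (conn_times hc R es')" unfolding Zh_def by (rule Zstar_le[OF finHE nr(1)])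
    then have "es' \<in> Opt" using nr ves unfolding Opt_def by auto
    then show False using minl nr(2) by fastforce
  qed
  have red: False if e1: "e1 \<in> set es" and gi: "inj_on g (set es - {e1})"
    and gA: "g ` (set es - {e1}) \<subseteq> HE"
    and st: "\<And>k. (\<forall>(u,v)\<in>set R. joined (set (take k es)) u v \<longrightarrow> joined (g ` (set (take k es) - {e1})) u v)
               \<and> sum hc (g ` (set (take k es) - {e1})) \<le> sum hc (set (take k es))" for e1 g
    using reduce[OF mo lenR fes hcnn e1 gi gA st] noRed by blast
  have Pnn: "\<forall>e\<in>set (take k es). hc e \<ge> 0" for k using hcnn sHE in_set_takeD by fast
  have rem: False if e1: "e1 \<in> set es"
    and jr: "\<And>k u v. (u,v) \<in> set R \<Longrightarrow> joined (set (take k es)) u v \<Longrightarrow> joined (set (take k es) - {e1}) u v" for e1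
  proof (rule red[OF e1, of id])
    show "inj_on id (set es - {e1})" by simp
    show "id ` (set es - {e1}) \<subseteq> HE" using sHE by auto
    fix k
    show "(\<forall>(u,v)\<in>set R. joined (set (take k es)) u v \<longrightarrow> joined (id ` (set (take k es) - {e1})) u v)
          \<and> sum hc (id ` (set (take k es) - {e1})) \<le> sum hc (set (take k es))"
      using jr sum_remove_le[OF finite_set Pnn[of k], of e1] by auto
  qed
  have eform: "\<exists>s t. s\<in>V \<and> t\<in>V \<and> s\<noteq>t \<and> e = {s,t}" if "e \<in> set es" for e
    using that sHE unfolding HE_def hat_E_def by blast
  have c2: "\<forall>e\<in>set es. card e = 2"
  proof
    fix e assume "e \<in> set es"
    then obtain s t where "s\<noteq>t" "e = {s,t}" using eform by blast
    then show "card e = 2" by simp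
  qed
  have acyc: "\<forall>j<length es. \<forall>x y. es!j = {x,y} \<longrightarrow> \<not> joined (set (take j es)) x y"
  proof (intro allI impI notI)
    fix j x y assume j: "j < length es" and ej: "es!j = {x,y}" and jx: "joined (set (take j es)) x y"
    show False
    proof (rule rem[of "es!j"])
      show "es!j \<in> set es" using j by simp
      fix k u v assume juv: "joined (set (take k es)) u v"
      show "joined (set (take k es) - {es!j}) u v"
      proof (cases "es!j \<in> set (take k es)")
        case False
        then have "set (take k es) - {es!j} = set (take k es)" by simp
        then show ?thesis using juv by simp
      next
        case True
        then have jk: "j < k" using distinct_take_mem[OF des j] by simp
        have "es!j \<notin> set (take j es)" using distinct_take_mem[OF des j] by simp
        moreover have "set (take j es) \<subseteq> set (take k es)" using jk by (simp add: set_take_subset_set_take)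
        ultimately have "set (take j es) \<subseteq> set (take k es) - {es!j}" by blast
        then have "joined (set (take k es) - {{x,y}}) x y" using joined_mono[OF jx] ej by simp
        then show ?thesis using joined_remove_edge[OF juv] ej by simp
      qed
    qed
  qed
  have eform2: "\<forall>e\<in>set es. \<exists>x y. e = {x,y}" using eform by blast
  have fo: "forest (set es)" by (rule forest_seq[OF des eform2 acyc])
  have pu: "\<forall>e\<in>set es. \<exists>(u,v)\<in>set R. path_uses (set es) u v e"
  proof (rule ballI, rule ccontr)
    fix e assume e: "e \<in> set es" and n: "\<not> (\<exists>(u,v)\<in>set R. path_uses (set es) u v e)"
    show False
    proof (rule rem[OF e])
      fix k u v assume uv: "(u,v) \<in> set R" and juv: "joined (set (take k es)) u v"
      show "joined (set (take k es) - {e}) u v"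
      proof (rule ccontr)
        assume "\<not> joined (set (take k es) - {e}) u v"
        from not_joined_path_uses[OF juv this] have "path_uses (set (take k es)) u v e" .
        then have "path_uses (set es) u v e" by (rule path_uses_mono) (rule set_take_subset)
        then show False using n uv by blast
      qed
    qed
  qed
  have notT: "u \<noteq> x \<and> v \<noteq> x" if "x \<notin> terminals R" "(u,v) \<in> set R" for x u v
    using that unfolding terminals_def by force
  have deg: "3 \<le> card {e\<in>set es. x\<in>e}" if xU: "x \<in> \<Union>(set es)" and xT: "x \<notin> terminals R" for x
  proof -
    define D where "D = {e\<in>set es. x\<in>e}"
    have fD: "finite D" unfolding D_def by simp
    have "D \<noteq> {}" using xU unfolding D_def by blast
    then have D0: "card D \<noteq> 0" using fD by simp
    have Dmem: "e \<in> D \<longleftrightarrow> e \<in> set es \<and> x \<in> e" for e unfolding D_def by simp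
    have other: "\<And>k u v. (u,v) \<in> set R \<Longrightarrow> u \<noteq> x \<and> v \<noteq> x" using notT[OF xT] by blast
    have nd1: "card D \<noteq> 1"
    proof
      assume "card D = 1"
      then obtain e where De: "D = {e}" by (rule card_1_singletonE)
      then have e: "e \<in> set es" "x \<in> e" using Dmem by auto
      obtain s t where st: "s\<noteq>t" "e = {s,t}" using eform[OF e(1)] by blast
      obtain y where y: "e = {x,y}" "y \<noteq> x" using st e(2) by auto
      have uniq: "e' = e" if "e' \<in> set es" "x \<in> e'" for e' using that Dmem De by blast
      show False
      proof (rule rem[OF e(1)])
        fix k u v assume uv: "(u,v) \<in> set R" and juv: "joined (set (take k es)) u v"
        define f where "f z = (if z = x then y else z)" for z
        have "joined (set (take k es) - {e}) (f u) (f v)"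
        proof (rule joined_hom[OF _ juv])
          fix s' t' assume st': "{s',t'} \<in> set (take k es)"
          show "joined (set (take k es) - {e}) (f s') (f t')"
          proof (cases "{s',t'} = e")
            case True
            then have "(s' = x \<and> t' = y) \<or> (s' = y \<and> t' = x)" using y(1) doubleton_cases by metis
            then have "f s' = f t'" unfolding f_def using y(2) by auto
            then show ?thesis by simp
          next
            case False
            have "{s',t'} \<in> set es" using st' in_set_takeD by fast
            then have "x \<notin> {s',t'}" using uniq False by blast
            then have "f s' = s'" "f t' = t'" unfolding f_def by auto
            moreover have "{s',t'} \<in> set (take k es) - {e}" using st' False by simp
            ultimately show ?thesis using joined_edge by metis
          qed
        qed
        moreover have "f u = u" "f v = v" using other[OF uv] unfolding f_def by auto
        ultimately show "joined (set (take k es) - {e}) u v" by simp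
      qed
    qed
    have nd2: "card D \<noteq> 2"
    proof
      assume "card D = 2"
      then obtain e1 e2 where D12: "D = {e1,e2}" and ne12: "e1 \<noteq> e2" by (auto simp: card_2_iff)
      have e1: "e1 \<in> set es" "x \<in> e1" and e2: "e2 \<in> set es" "x \<in> e2" using D12 Dmem by auto
      have uniq: "e' = e1 \<or> e' = e2" if "e' \<in> set es" "x \<in> e'" for e' using that Dmem D12 by blast
      have split: "\<exists>a. e = {x,a} \<and> a \<noteq> x \<and> a \<in> V" if sp: "e \<in> set es" "x \<in> e" for e
      proof -
        obtain s t where st: "s\<in>V" "t\<in>V" "s\<noteq>t" "e = {s,t}" using eform[OF sp(1)] by blast
        show ?thesis
        proof (cases "x = s")
          case True then show ?thesis using st by blast
        next
          case False then have "x = t" using st sp(2) by auto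
          then show ?thesis using st by (auto simp: insert_commute)
        qed
      qed
      obtain a where a: "e1 = {x,a}" "a \<noteq> x" "a \<in> V" using split[OF e1] by blast
      obtain b where b: "e2 = {x,b}" "b \<noteq> x" "b \<in> V" using split[OF e2] by blast
      have ab: "a \<noteq> b" using a b ne12 by blast
      have xab: "x \<notin> {a,b}" using a b by auto
      have abF: "{a,b} \<notin> set es"
      proof
        assume abF: "{a,b} \<in> set es"
        have "e1 \<noteq> {a,b}" "e2 \<noteq> {a,b}" using xab e1(2) e2(2) by auto
        then have "e1 \<in> set es - {{a,b}}" "e2 \<in> set es - {{a,b}}" using e1 e2 by auto
        then have "joined (set es - {{a,b}}) x a" "joined (set es - {{a,b}}) x b"
          using a(1) b(1) joined_edge by metis+
        then have "joined (set es - {{a,b}}) a b" using joined_sym joined_trans by metis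
        then show False using forest_D[OF fo abF] by simp
      qed
      have deg2: False
        if D': "D = {f1,f2}" and f12: "f1 \<noteq> f2" and f1: "f1 = {x,a'}" and f2: "f2 = {x,b'}"
          and a': "a' \<noteq> x" "a' \<in> V" and b': "b' \<noteq> x" "b' \<in> V" and ab': "a' \<noteq> b'"
          and abF': "{a',b'} \<notin> set es"
          and bef: "\<And>k. f2 \<in> set (take k es) \<Longrightarrow> f1 \<in> set (take k es)" for f1 f2 a' b'
      proof -
        have f1s: "f1 \<in> set es" and f2s: "f2 \<in> set es" using D' Dmem by auto
        have uniq': "e' = f1 \<or> e' = f2" if "e' \<in> set es" "x \<in> e'" for e' using that Dmem D' by blast
        define g where "g e = (if e = f2 then {a',b'} else e)" for e
        show False
        proof (rule red[OF f1s, of g])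
          show "inj_on g (set es - {f1})"
          proof (rule inj_onI)
            fix p q assume p: "p \<in> set es - {f1}" and q: "q \<in> set es - {f1}" and gpq: "g p = g q"
            show "p = q"
            proof (cases "p = f2")
              case True
              then have "g p = {a',b'}" unfolding g_def by simp
              then show ?thesis using gpq q abF' True unfolding g_def by (auto split: if_splits)
            next
              case False
              then have "g p = p" unfolding g_def by simp
              then show ?thesis using gpq p abF' unfolding g_def by (auto split: if_splits)
            qed
          qed
          have abH: "{a',b'} \<in> HE" unfolding HE_def using a' b' ab' by (simp add: hat_E_I)
          show "g ` (set es - {f1}) \<subseteq> HE" using sHE abH unfolding g_def by auto
          fix k
          define P where "P = set (take k es)"
          have PF: "P \<subseteq> set es" unfolding P_def by (rule set_take_subset)
          have conn: "joined (g ` (P - {f1})) u v" if uv: "(u,v) \<in> set R" and juv: "joined P u v" for u v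
          proof -
            define f where "f z = (if z = x then a' else z)" for z
            have "joined (g ` (P - {f1})) (f u) (f v)"
            proof (rule joined_hom[OF _ juv])
              fix s t assume st: "{s,t} \<in> P"
              show "joined (g ` (P - {f1})) (f s) (f t)"
              proof (cases "{s,t} = f1")
                case True
                then have "(s = x \<and> t = a') \<or> (s = a' \<and> t = x)" using f1 doubleton_cases by metis
                then have "f s = f t" unfolding f_def using a' by auto
                then show ?thesis by simp
              next
                case nf1: False
                show ?thesis
                proof (cases "{s,t} = f2")
                  case True
                  then have c: "(s = x \<and> t = b') \<or> (s = b' \<and> t = x)" using f2 doubleton_cases by metis
                  have "f2 \<in> P - {f1}" using st True f12 by auto
                  then have "g f2 \<in> g ` (P - {f1})" by blast
                  then have "{a',b'} \<in> g ` (P - {f1})" unfolding g_def by simp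
                  then have "joined (g ` (P - {f1})) a' b'" by (rule joined_edge)
                  then show ?thesis using c b' unfolding f_def using joined_sym by auto
                next
                  case nf2: False
                  have "{s,t} \<in> set es" using st PF by blast
                  then have "x \<notin> {s,t}" using uniq' nf1 nf2 by blast
                  then have "f s = s" "f t = t" unfolding f_def by auto
                  moreover have "{s,t} \<in> P - {f1}" using st nf1 by simp
                  then have "g {s,t} \<in> g ` (P - {f1})" by blast
                  then have "{s,t} \<in> g ` (P - {f1})" unfolding g_def using nf2 by simp
                  ultimately show ?thesis using joined_edge by metis
                qed
              qed
            qed
            moreover have "f u = u" "f v = v" using other[OF uv] unfolding f_def by auto
            ultimately show ?thesis by simp
          qed
          have finP: "finite P" unfolding P_def by simp
          have PnnP: "\<forall>e\<in>P. hc e \<ge> 0" unfolding P_def by (rule Pnn)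
          have sm: "sum hc (g ` (P - {f1})) \<le> sum hc P"
          proof (cases "f2 \<in> P")
            case True
            then have f1P: "f1 \<in> P" using bef unfolding P_def by blast
            have "P - {f1} = insert f2 (P - {f1} - {f2})" using True f12 by blast
            then have "g ` (P - {f1}) = insert (g f2) (g ` (P - {f1} - {f2}))" by (metis image_insert)
            moreover have "g ` (P - {f1} - {f2}) = P - {f1} - {f2}" unfolding g_def by auto
            ultimately have gi: "g ` (P - {f1}) = insert {a',b'} (P - {f1} - {f2})" unfolding g_def by simp
            have "{a',b'} \<notin> P - {f1} - {f2}" using abF' PF by blast
            then have "sum hc (g ` (P - {f1})) = hc {a',b'} + sum hc (P - {f1} - {f2})"
              unfolding gi using finP by simp
            moreover have "sum hc P = hc f1 + hc f2 + sum hc (P - {f1} - {f2})"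
            proof -
              have "sum hc P = hc f1 + sum hc (P - {f1})" using f1P finP by (simp add: sum.remove)
              moreover have "sum hc (P - {f1}) = hc f2 + sum hc (P - {f1} - {f2})"
                using True f12 finP by (subst sum.remove[of _ f2]) auto
              ultimately show ?thesis by simp
            qed
            moreover have "hc {a',b'} \<le> hc {a',x} + hc {x,b'}"
              unfolding hc_def by (rule hatc_triangle[OF net con a'(2) _ b'(2)]) (use xU a' b' ab' sHE in \<open>auto simp: HE_def hat_E_def\<close>)
            moreover have "{a',x} = f1" using f1 by auto
            ultimately show ?thesis using f2 by simp
          next
            case False
            then have "g ` (P - {f1}) = P - {f1}" unfolding g_def by auto
            then show ?thesis using sum_remove_le[OF finP PnnP, of f1] by simp
          qed
          show "(\<forall>(u,v)\<in>set R. joined (set (take k es)) u v \<longrightarrow> joined (g ` (set (take k es) - {f1})) u v)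
               \<and> sum hc (g ` (set (take k es) - {f1})) \<le> sum hc (set (take k es))"
            using conn sm unfolding P_def by auto
        qed
      qed
      obtain i1 where i1: "i1 < length es" "es!i1 = e1" using e1(1) by (auto simp: in_set_conv_nth)
      obtain i2 where i2: "i2 < length es" "es!i2 = e2" using e2(1) by (auto simp: in_set_conv_nth)
      show False
      proof (cases "i1 < i2")
        case True
        have "e1 \<in> set (take k es)" if "e2 \<in> set (take k es)" for k
          using that distinct_take_mem[OF des i1(1), of k] distinct_take_mem[OF des i2(1), of k] True i1 i2 by auto
        then show False using deg2[OF D12 ne12 a(1) b(1) a(2) a(3) b(2) b(3) ab abF] by blast
      next
        case False
        then have "i2 < i1" using i1 i2 ne12 by (metis linorder_neqE_nat)
        have "e2 \<in> set (take k es)" if "e1 \<in> set (take k es)" for k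
          using that distinct_take_mem[OF des i1(1), of k] distinct_take_mem[OF des i2(1), of k] \<open>i2 < i1\<close> i1 i2 by auto
        moreover have "D = {e2,e1}" using D12 by auto
        moreover have "{b,a} \<notin> set es" using abF by (simp add: insert_commute)
        ultimately show False using deg2[of e2 e1 b a] ne12 a b ab by auto
      qed
    qed
    show ?thesis using D0 nd1 nd2 unfolding D_def[symmetric] by linarith
  qed
  define F where "F = set es"
  have rf: "r_forest HE R F"
    unfolding r_forest_def F_def using sHE fo jR pu by auto
  have fv: "forest_value hc R \<Phi> F = Zh"
    unfolding forest_value_def
  proof (rule cInf_eq_minimum)
    have "es \<in> {es'. distinct es' \<and> set es' = F}" using des F_def by simp
    then show "Zh \<in> (\<lambda>es. \<Phi> (conn_times hc R es)) ` {es'. distinct es' \<and> set es' = F}"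
      using ves by (metis image_eqI)
    fix z assume "z \<in> (\<lambda>es. \<Phi> (conn_times hc R es)) ` {es'. distinct es' \<and> set es' = F}"
    then obtain es' where es': "distinct es'" "set es' = F" "z = \<Phi> (conn_times hc R es')" by blast
    have "feasible_seq HE R es'" unfolding feasible_seq_def using es' sHE jR F_def by auto
    then have "Zh \<le> \<Phi> (conn_times hc R es')" unfolding Zh_def by (rule Zstar_le[OF finHE])
    then show "Zh \<le> z" using es'(3) by simp
  qed
  have cnt: "card (non_terminals R F) \<le> 2 * r - 2"
  proof (cases "F = {}")
    case True then show ?thesis unfolding non_terminals_def by simp
  next
    case False
    define W where "W = \<Union>F"
    define T where "T = terminals R"
    define N where "N = W - T"
    have finF: "finite F" unfolding F_def by simp
    have c2F: "\<forall>e\<in>F. card e = 2" using c2 F_def by simp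
    have finW: "finite W" unfolding W_def by (rule finite_Union[OF finF]) (use c2F card2_finite in blast)
    have hs: "(\<Sum>v\<in>W. card {e\<in>F. v\<in>e}) = 2 * card F" unfolding W_def by (rule handshake[OF finF c2F])
    have foF: "forest F" using fo F_def by simp
    have fc: "card F < card W" unfolding W_def by (rule forest_card[OF finF foF c2F False])
    have lb: "(\<Sum>v\<in>W. (if v \<in> T then 1 else 3::nat)) \<le> (\<Sum>v\<in>W. card {e\<in>F. v\<in>e})"
    proof (rule sum_mono)
      fix v assume v: "v \<in> W"
      have "{e\<in>F. v\<in>e} \<noteq> {}" using v W_def by blast
      moreover have "finite {e\<in>F. v\<in>e}" using finF by simp
      ultimately have g1: "card {e\<in>F. v\<in>e} \<ge> 1" by (simp add: Suc_leI card_gt_0_iff)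
      have g3: "v \<notin> T \<Longrightarrow> 3 \<le> card {e\<in>F. v\<in>e}" using deg v unfolding W_def T_def F_def by blast
      show "(if v \<in> T then 1 else 3) \<le> card {e\<in>F. v\<in>e}" using g1 g3 by auto
    qed
    have WU: "W = (W \<inter> T) \<union> N" "(W \<inter> T) \<inter> N = {}" unfolding N_def by auto
    have finWT: "finite (W \<inter> T)" "finite N" using finW unfolding N_def by auto
    have "(\<Sum>v\<in>W. (if v \<in> T then 1 else 3::nat)) =
          (\<Sum>v\<in>W \<inter> T. (if v \<in> T then 1 else 3::nat)) + (\<Sum>v\<in>N. (if v \<in> T then 1 else 3::nat))"
      by (subst WU(1), rule sum.union_disjoint[OF finWT WU(2)])
    moreover have "(\<Sum>v\<in>W \<inter> T. (if v \<in> T then 1 else 3::nat)) = (\<Sum>v\<in>W \<inter> T. 1)"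
      by (rule sum.cong) auto
    moreover have "(\<Sum>v\<in>N. (if v \<in> T then 1 else 3::nat)) = (\<Sum>v\<in>N. 3)"
      by (rule sum.cong) (auto simp: N_def)
    ultimately have sp: "(\<Sum>v\<in>W. (if v \<in> T then 1 else 3::nat)) = card (W \<inter> T) + 3 * card N"
      by simp
    have cW: "card W = card (W \<inter> T) + card N"
      by (subst WU(1), rule card_Un_disjoint[OF finWT WU(2)])
    have cT: "card T \<le> 2 * r"
    proof -
      have "card T \<le> card (fst ` set R) + card (snd ` set R)" unfolding T_def terminals_def by (rule card_Un_le)
      also have "\<dots> \<le> card (set R) + card (set R)" by (intro add_mono card_image_le) auto
      also have "\<dots> \<le> 2 * r" using card_length[of R] lenR by simp
      finally show ?thesis .
    qed
    have "card (W \<inter> T) \<le> card T" using finW by (intro card_mono) (auto simp: T_def terminals_def)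
    then have "card N + 2 \<le> 2 * r" using cT cW sp lb hs fc by linarith
    moreover have "non_terminals R F = N" unfolding non_terminals_def N_def W_def T_def ..
    ultimately show ?thesis by simp
  qed
  show ?thesis using rf fv cnt unfolding HE_def hc_def Zh_def by blast
qed


theorem corollary2:
  fixes V :: "'a set" and E :: "'a set set" and c :: "'a set \<Rightarrow> real"
    and R :: "('a \<times> 'a) list" and r :: nat and \<Phi> :: "real list \<Rightarrow> real"
  assumes "network V E c"
    and "connected_net V E"
    and "length R = r" and "r \<ge> 2"
    and "\<forall>(u, v)\<in>set R. u \<in> V \<and> v \<in> V \<and> u \<noteq> v"
    and "monotone_obj r \<Phi>"
  shows "Zstar E c R \<Phi> = Zstar (hat_E V) (hat_c E c) R \<Phi> \<and>
    (\<exists>F. r_forest (hat_E V) R F \<and>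
         forest_value (hat_c E c) R \<Phi> F = Zstar (hat_E V) (hat_c E c) R \<Phi> \<and>
         card (non_terminals R F) \<le> 2 * r - 2)"
  using part1[OF assms(1,2,3,5,6)] part2[OF assms] by blast

end
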